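(* For $0\le L<1<R$ define $$\Phi(L,R)=\mathrm{p.v.}\int_L^R\frac{\pi\sqrt{(R^2-x^2)(x^2-L^2)}}{x^2-1}\,dx,$$ the principal value being taken at $x=1$. (i) $\Phi(L,R)$ is strictly increasing in $L$ and strictly increasing in $R$. (ii) There is a unique $R_c>1$ with $\Phi(0,R_c)=0$ (numerically $R_c\approx1.8102$). (iii) If $\Phi(L,R)=0$, then $L+R<2$ and $L^2+R^2>2$. *)

theory Defs
  imports "HOL-Analysis.Analysis"
begin

definition phi_integrand :: "real \<Rightarrow> real \<Rightarrow> real \<Rightarrow> real" where
  "phi_integrand L R x = pi * sqrt ((R\<^sup>2 - x\<^sup>2) * (x\<^sup>2 - L\<^sup>2)) / (x\<^sup>2 - 1)"

definition Phi :: "real \<Rightarrow> real \<Rightarrow> real" where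
  "Phi L R = Lim (at_right 0)
     (\<lambda>\<epsilon>. integral {L..1 - \<epsilon>} (phi_integrand L R) + integral {1 + \<epsilon>..R} (phi_integrand L R))"

end

theory Submission
  imports Defs
begin

lemma G_integrable:
  fixes P n :: "real \<Rightarrow> real"
  assumes Pc: "continuous_on {a..b} P" and nc: "continuous_on {a..b} n"
  and Pd: "(P has_real_derivative P') (at 1)" and nd: "(n has_real_derivative n') (at 1)"
  and P1: "P 1 = c * n 1"
  shows "(\<lambda>x. (P x - c * n x) / (x - 1)) integrable_on {a..b}"
proof -
  define Q where "Q x = P x - c * n x" for x
  define Gt where "Gt x = (if x = 1 then P' - c * n' else Q x / (x - 1))" for x
  have Qd: "(Q has_real_derivative (P' - c * n')) (at 1)"
    unfolding Q_def by (auto intro!: derivative_eq_intros Pd nd)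
  have Q1: "Q 1 = 0" using P1 by (simp add: Q_def)
  have lim: "((\<lambda>y. (Q y - Q 1) / (y - 1)) \<longlongrightarrow> P' - c * n') (at 1)"
    using Qd by (simp add: has_field_derivative_iff)
  have ev: "eventually (\<lambda>y. (Q y - Q 1) / (y - 1) = Gt y) (at 1)"
    unfolding eventually_at by (rule exI[of _ 1]) (auto simp: Gt_def Q1)
  have "(Gt \<longlongrightarrow> P' - c * n') (at 1)"
    using tendsto_cong[OF ev] lim by blast
  then have c1: "isCont Gt 1" by (simp add: isCont_def Gt_def)
  have "continuous_on {a..b} Gt"
  proof (clarsimp simp: continuous_on_eq_continuous_within)
    fix x assume x: "a \<le> x" "x \<le> b"
    show "continuous (at x within {a..b}) Gt"
    proof (cases "x = 1")
      case True
      then show ?thesis using c1 continuous_at_imp_continuous_at_within by blast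
    next
      case False
      have "continuous (at x within {a..b}) P" "continuous (at x within {a..b}) n"
        using Pc nc x by (auto simp: continuous_on_eq_continuous_within)
      then have "continuous (at x within {a..b}) (\<lambda>y. Q y / (y - 1))"
        unfolding Q_def using False by (intro continuous_intros) auto
      then show ?thesis
        by (rule continuous_transform_within[where \<delta> = "dist x 1"]) 
           (use False x in \<open>auto simp: Gt_def dist_real_def\<close>)
    qed
  qed
  then have "Gt integrable_on {a..b}" by (rule integrable_continuous_interval)
  then show ?thesis
    by (rule integrable_spike_finite[where S = "{1}", rotated 2]) (auto simp: Gt_def Q_def)
qed

lemma pv_general:
  fixes P n M0 f :: "real \<Rightarrow> real"
  assumes ab: "a < 1" "1 < b"
  and Pc: "continuous_on {a..b} P" and nc: "continuous_on {a..b} n"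
  and Pd: "(P has_real_derivative P') (at 1)" and nd: "(n has_real_derivative n') (at 1)"
  and P1: "P 1 = c * n 1"
  and M0c: "continuous_on {a..b} M0"
  and Md: "\<And>x. a < x \<Longrightarrow> x < b \<Longrightarrow> x \<noteq> 1 \<Longrightarrow>
      ((\<lambda>x. M0 x + k * ln ((x - 1)\<^sup>2)) has_real_derivative n x / (x - 1)) (at x)"
  and f: "\<And>x. a \<le> x \<Longrightarrow> x \<le> b \<Longrightarrow> x \<noteq> 1 \<Longrightarrow> f x = P x / (x - 1)"
  shows "((\<lambda>e. integral {a..1-e} f + integral {1+e..b} f) \<longlongrightarrow>
     integral {a..b} (\<lambda>x. (P x - c * n x) / (x - 1))
       + c * ((M0 b + k * ln ((b - 1)\<^sup>2)) - (M0 a + k * ln ((a - 1)\<^sup>2)))) (at_right 0)"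
proof -
  define G where "G x = (P x - c * n x) / (x - 1)" for x
  define M where "M x = M0 x + k * ln ((x - 1)\<^sup>2)" for x
  define I where "I x = integral {a..x} G" for x
  have Gi: "G integrable_on {a..b}"
    unfolding G_def by (rule G_integrable[OF Pc nc Pd nd P1])
  have Ic: "isCont I 1"
    using continuous_on_interior[OF indefinite_integral_continuous_1[OF Gi], of 1] ab
    unfolding I_def[abs_def] by simp
  have M0c1: "isCont M0 1"
    using continuous_on_interior[OF M0c, of 1] ab by simp
  have key: "integral {a..1-e} f + integral {1+e..b} f
      = I (1 - e) + (I b - I (1 + e)) + c * (M b - M a) + c * (M0 (1 - e) - M0 (1 + e))"
    if e: "0 < e" "e < 1 - a" "e < b - 1" for e
  proof -
    have Mcont: "continuous_on S M" if "S \<subseteq> {a..b}" "1 \<notin> S" for S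
    proof -
      have "continuous_on S M0" using continuous_on_subset[OF M0c that(1)] .
      moreover have "continuous_on S (\<lambda>x. ln ((x - 1)\<^sup>2))"
        using that(2) by (intro continuous_intros) auto
      ultimately show ?thesis unfolding M_def by (intro continuous_on_add continuous_on_mult_left)
    qed
    have hl: "((\<lambda>x. n x / (x - 1)) has_integral (M (1 - e) - M a)) {a..1-e}"
    proof (rule fundamental_theorem_of_calculus_interior)
      show "a \<le> 1 - e" using e by simp
      show "continuous_on {a..1 - e} M" using e by (intro Mcont) auto
      fix x assume "x \<in> {a<..<1 - e}"
      then show "(M has_vector_derivative n x / (x - 1)) (at x)"
        using Md[of x] e unfolding M_def has_real_derivative_iff_has_vector_derivative[symmetric]
        by auto
    qed
    have hr: "((\<lambda>x. n x / (x - 1)) has_integral (M b - M (1 + e))) {1+e..b}"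
    proof (rule fundamental_theorem_of_calculus_interior)
      show "1 + e \<le> b" using e by simp
      show "continuous_on {1 + e..b} M" using e by (intro Mcont) auto
      fix x assume "x \<in> {1 + e<..<b}"
      then show "(M has_vector_derivative n x / (x - 1)) (at x)"
        using Md[of x] e unfolding M_def has_real_derivative_iff_has_vector_derivative[symmetric]
        by auto
    qed
    have gl: "(G has_integral I (1 - e)) {a..1-e}"
      unfolding I_def using integrable_on_subinterval[OF Gi, of a "1 - e"] e
      by (auto intro: integrable_integral)
    have gr: "(G has_integral integral {1+e..b} G) {1+e..b}"
      using integrable_on_subinterval[OF Gi, of "1 + e" b] e
      by (auto intro: integrable_integral)
    have "((\<lambda>x. G x + c * (n x / (x - 1))) has_integral (I (1 - e) + c * (M (1 - e) - M a))) {a..1-e}"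
      by (intro has_integral_add gl has_integral_mult_right hl)
    moreover have "\<And>x. x \<in> {a..1-e} \<Longrightarrow> G x + c * (n x / (x - 1)) = f x"
      using e by (subst f) (auto simp: G_def diff_divide_distrib)
    ultimately have il: "integral {a..1-e} f = I (1 - e) + c * (M (1 - e) - M a)"
      by (metis (no_types, lifting) has_integral_cong integral_unique)
    have "((\<lambda>x. G x + c * (n x / (x - 1))) has_integral (integral {1+e..b} G + c * (M b - M (1 + e)))) {1+e..b}"
      by (intro has_integral_add gr has_integral_mult_right hr)
    moreover have "\<And>x. x \<in> {1+e..b} \<Longrightarrow> G x + c * (n x / (x - 1)) = f x"
      using e by (subst f) (auto simp: G_def diff_divide_distrib)
    ultimately have ir: "integral {1+e..b} f = integral {1+e..b} G + c * (M b - M (1 + e))"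
      by (metis (no_types, lifting) has_integral_cong integral_unique)
    have comb: "integral {a..1+e} G + integral {1+e..b} G = integral {a..b} G"
      using e Gi by (intro Henstock_Kurzweil_Integration.integral_combine) auto
    have "M (1 - e) - M (1 + e) = M0 (1 - e) - M0 (1 + e)"
      by (simp add: M_def power2_eq_square)
    then have h: "c * M (1 - e) - c * M (1 + e) = c * M0 (1 - e) - c * M0 (1 + e)"
      by (metis right_diff_distrib)
    show ?thesis using il ir comb h unfolding I_def right_diff_distrib by linarith
  qed

  have ev: "eventually (\<lambda>e. I (1 - e) + (I b - I (1 + e)) + c * (M b - M a) + c * (M0 (1 - e) - M0 (1 + e))
      = integral {a..1-e} f + integral {1+e..b} f) (at_right 0)"
  proof -
    have "eventually (\<lambda>e. e \<in> {0<..<min (1 - a) (b - 1)}) (at_right (0::real))"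
      using ab by (intro eventually_at_right_real) auto
    then show ?thesis by eventually_elim (use key in auto)
  qed
  have t1: "((\<lambda>e. 1 - e) \<longlongrightarrow> (1::real)) (at_right 0)"
    by (auto intro!: tendsto_eq_intros)
  have t2: "((\<lambda>e. 1 + e) \<longlongrightarrow> (1::real)) (at_right 0)"
    by (auto intro!: tendsto_eq_intros)
  have "((\<lambda>e. I (1 - e) + (I b - I (1 + e)) + c * (M b - M a) + c * (M0 (1 - e) - M0 (1 + e)))
      \<longlongrightarrow> I 1 + (I b - I 1) + c * (M b - M a) + c * (M0 1 - M0 1)) (at_right 0)"
    by (intro tendsto_intros isCont_tendsto_compose[OF Ic t1] isCont_tendsto_compose[OF Ic t2]
        isCont_tendsto_compose[OF M0c1 t1] isCont_tendsto_compose[OF M0c1 t2])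
  then have "((\<lambda>e. integral {a..1-e} f + integral {1+e..b} f) \<longlongrightarrow> I b + c * (M b - M a)) (at_right 0)"
    using tendsto_cong[OF ev] by simp
  then show ?thesis unfolding I_def G_def[abs_def] M_def by simp
qed

lemma dln:
  fixes f :: "real \<Rightarrow> real"
  assumes "(f has_real_derivative D) (at x)" "0 < f x"
  shows "((\<lambda>x. ln (f x)) has_real_derivative D / f x) (at x)"
  using DERIV_chain2[OF DERIV_ln_divide[OF assms(2)] assms(1)] by simp

lemma dlnsq:
  fixes x :: real
  assumes "x \<noteq> 1"
  shows "((\<lambda>x. ln ((x - 1)\<^sup>2)) has_real_derivative 2 / (x - 1)) (at x)"
proof -
  have "((\<lambda>x. (x - 1)\<^sup>2) has_real_derivative 2 * (x - 1)) (at x)"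
    by (auto intro!: derivative_eq_intros)
  moreover have "(x - 1)\<^sup>2 > 0" using assms by simp
  ultimately have "((\<lambda>x. ln ((x - 1)\<^sup>2)) has_real_derivative (2 * (x - 1)) / (x - 1)\<^sup>2) (at x)"
    by (rule dln)
  moreover have "(2 * (x - 1)) / (x - 1)\<^sup>2 = 2 / (x - 1)" using assms
    by (simp only: power2_eq_square nonzero_mult_divide_mult_cancel_right[of "x - 1"])
  ultimately show ?thesis by simp
qed

lemma M1_deriv:
  fixes L R x C :: real
  assumes "0 \<le> L" "L < x" "x < R" "x \<noteq> 1" "1 < R" and C0: "C > 0" and C2: "C\<^sup>2 = R\<^sup>2 - 1"
  shows "((\<lambda>x. (sqrt (R\<^sup>2 - x\<^sup>2) - C * ln (C + sqrt (R\<^sup>2 - x\<^sup>2)) + C / 2 * ln (x + 1))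
     + C / 4 * ln ((x - 1)\<^sup>2)) has_real_derivative
     (x * sqrt (R\<^sup>2 - x\<^sup>2) / (x + 1)) / (x - 1)) (at x)"
proof -
  define t where "t = sqrt (R\<^sup>2 - x\<^sup>2)"
  have x0: "0 < x" using assms by simp
  have "x\<^sup>2 < R\<^sup>2" using assms by (intro power_strict_mono) auto
  then have t0: "t > 0" and t2: "t\<^sup>2 = R\<^sup>2 - x\<^sup>2" by (auto simp: t_def)
  have dt: "((\<lambda>x. sqrt (R\<^sup>2 - x\<^sup>2)) has_real_derivative (- x / t)) (at x)"
    unfolding t_def using \<open>x\<^sup>2 < R\<^sup>2\<close> by (auto intro!: derivative_eq_intros) (simp add: divide_inverse_commute)
  have sq: "(x - 1)\<^sup>2 > 0" using assms by auto
  have "((\<lambda>x. (sqrt (R\<^sup>2 - x\<^sup>2) - C * ln (C + sqrt (R\<^sup>2 - x\<^sup>2)) + C / 2 * ln (x + 1))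
     + C / 4 * ln ((x - 1)\<^sup>2)) has_real_derivative
     (- x / t - C * ((- x / t) / (C + t)) + C / 2 * (1 / (x + 1))
       + C / 4 * (2 / (x - 1)))) (at x)"
  proof -
    have a: "((\<lambda>x. C + sqrt (R\<^sup>2 - x\<^sup>2)) has_real_derivative - x / t) (at x)"
      using DERIV_add[OF DERIV_const dt] by simp
    have b: "((\<lambda>x. ln (C + sqrt (R\<^sup>2 - x\<^sup>2))) has_real_derivative (- x / t) / (C + t)) (at x)"
    proof -
      have "0 < C + sqrt (R\<^sup>2 - x\<^sup>2)" using C0 t0 unfolding t_def by linarith
      from dln[OF a this] show ?thesis by (simp add: t_def)
    qed
    have c: "((\<lambda>x. ln (x + 1)) has_real_derivative 1 / (x + 1)) (at x)"
    proof -
      have "((\<lambda>x. x + 1) has_real_derivative 1) (at x)" by (auto intro!: derivative_eq_intros)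
      from dln[OF this] x0 show ?thesis by simp
    qed
    show ?thesis
      by (intro DERIV_add DERIV_diff DERIV_cmult dt b c dlnsq) (use assms in auto)
  qed
  moreover have "- x / t - C * ((- x / t) / (C + t)) + C / 2 * (1 / (x + 1))
       + C / 4 * (2 / (x - 1)) = (x * t / (x + 1)) / (x - 1)"
  proof -
    have a: "x - 1 \<noteq> 0" "x + 1 \<noteq> 0" "C + t \<noteq> 0" "t \<noteq> 0" using assms x0 t0 C0 by auto
    have s1: "- x / t - C * ((- x / t) / (C + t)) = - x / (C + t)"
    proof -
      have "- x / t - C * ((- x / t) / (C + t)) = (-x/t)*(1 - C/(C+t))" by (simp add: algebra_simps)
      also have "1 - C/(C+t) = t/(C+t)" using a by (simp add: field_simps)
      finally show ?thesis using a by simp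
    qed
    have s2: "C / 2 * (1 / (x + 1)) + C / 4 * (2 / (x - 1)) = C * x / ((x + 1) * (x - 1))"
    proof -
      have "C / 2 * (1 / (x + 1)) + C / 4 * (2 / (x - 1)) = C * x / ((x + 1) * (x - 1))"
      proof -
        have "(x+1)*(x-1) \<noteq> 0" using a by simp
        then have "x * x - 1 \<noteq> 0" by (simp add: algebra_simps)
        then show ?thesis using a(1,2) by (simp add: field_simps)
      qed
      then show ?thesis by simp
    qed
    have s3: "- x / (C + t) + C * x / ((x + 1) * (x - 1)) = (x * t / (x + 1)) / (x - 1)"
    proof -
      have D: "(x + 1) * (x - 1) = (C - t) * (C + t)"
        using C2 t2 by (simp add: algebra_simps power2_eq_square)
      have "C - t \<noteq> 0" using D a by auto
      then have e1: "- x / (C + t) = (- x * (C - t)) / ((C - t) * (C + t))" by simp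
      have "- x / (C + t) + C * x / ((C - t) * (C + t)) = (- x * (C - t) + C * x) / ((C - t) * (C + t))"
        by (simp only: e1 add_divide_distrib)
      also have "- x * (C - t) + C * x = x * t" by (simp add: algebra_simps)
      finally have "- x / (C + t) + C * x / ((C - t) * (C + t)) = x * t / ((C - t) * (C + t))" .
      then show ?thesis using D by simp
    qed
    show ?thesis using s1 s2 s3 by linarith
  qed
  ultimately show ?thesis by (simp add: t_def)
qed

lemma M2_deriv:
  fixes L R x b :: real
  assumes "0 \<le> L" "L < x" "x \<noteq> 1" and b0: "b > 0" and b2: "b\<^sup>2 = 1 - L\<^sup>2"
  shows "((\<lambda>x. (sqrt (x\<^sup>2 - L\<^sup>2) - b * ln (b + sqrt (x\<^sup>2 - L\<^sup>2)) + b / 2 * ln (x + 1))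
     + b / 4 * ln ((x - 1)\<^sup>2)) has_real_derivative
     (x * sqrt (x\<^sup>2 - L\<^sup>2) / (x + 1)) / (x - 1)) (at x)"
proof -
  define t where "t = sqrt (x\<^sup>2 - L\<^sup>2)"
  have x0: "0 < x" using assms by simp
  have "L\<^sup>2 < x\<^sup>2" using assms by (intro power_strict_mono) auto
  then have t0: "t > 0" and t2: "t\<^sup>2 = x\<^sup>2 - L\<^sup>2" by (auto simp: t_def)
  have dt: "((\<lambda>x. sqrt (x\<^sup>2 - L\<^sup>2)) has_real_derivative (x / t)) (at x)"
    unfolding t_def using \<open>L\<^sup>2 < x\<^sup>2\<close> by (auto intro!: derivative_eq_intros) (simp add: divide_inverse_commute)
  have "((\<lambda>x. (sqrt (x\<^sup>2 - L\<^sup>2) - b * ln (b + sqrt (x\<^sup>2 - L\<^sup>2)) + b / 2 * ln (x + 1))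
     + b / 4 * ln ((x - 1)\<^sup>2)) has_real_derivative
     (x / t - b * ((x / t) / (b + t)) + b / 2 * (1 / (x + 1))
       + b / 4 * (2 / (x - 1)))) (at x)"
  proof -
    have a: "((\<lambda>x. b + sqrt (x\<^sup>2 - L\<^sup>2)) has_real_derivative x / t) (at x)"
      using DERIV_add[OF DERIV_const dt] by simp
    have bb: "((\<lambda>x. ln (b + sqrt (x\<^sup>2 - L\<^sup>2))) has_real_derivative (x / t) / (b + t)) (at x)"
    proof -
      have "0 < b + sqrt (x\<^sup>2 - L\<^sup>2)" using b0 t0 unfolding t_def by linarith
      from dln[OF a this] show ?thesis by (simp add: t_def)
    qed
    have c: "((\<lambda>x. ln (x + 1)) has_real_derivative 1 / (x + 1)) (at x)"
    proof -
      have "((\<lambda>x. x + 1) has_real_derivative 1) (at x)" by (auto intro!: derivative_eq_intros)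
      from dln[OF this] x0 show ?thesis by simp
    qed
    show ?thesis
      by (intro DERIV_add DERIV_diff DERIV_cmult dt bb c dlnsq) (use assms in auto)
  qed
  moreover have "x / t - b * ((x / t) / (b + t)) + b / 2 * (1 / (x + 1))
       + b / 4 * (2 / (x - 1)) = (x * t / (x + 1)) / (x - 1)"
  proof -
    have a: "x - 1 \<noteq> 0" "x + 1 \<noteq> 0" "b + t \<noteq> 0" "t \<noteq> 0" using assms x0 t0 b0 by auto
    have s1: "x / t - b * ((x / t) / (b + t)) = x / (b + t)"
    proof -
      have "x / t - b * ((x / t) / (b + t)) = (x/t)*(1 - b/(b+t))" by (simp add: algebra_simps)
      also have "1 - b/(b+t) = t/(b+t)" using a by (simp add: field_simps)
      finally show ?thesis using a by simp
    qed
    have s2: "b / 2 * (1 / (x + 1)) + b / 4 * (2 / (x - 1)) = b * x / ((x + 1) * (x - 1))"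
    proof -
      have "(x+1)*(x-1) \<noteq> 0" using a by simp
      then have "x * x - 1 \<noteq> 0" by (simp add: algebra_simps)
      then show ?thesis using a(1,2) by (simp add: field_simps)
    qed
    have s3: "x / (b + t) + b * x / ((x + 1) * (x - 1)) = (x * t / (x + 1)) / (x - 1)"
    proof -
      have D: "(x + 1) * (x - 1) = (t - b) * (b + t)"
        using b2 t2 by (simp add: algebra_simps power2_eq_square)
      have "t - b \<noteq> 0" using D a by auto
      then have e1: "x / (b + t) = (x * (t - b)) / ((t - b) * (b + t))" by simp
      have "x / (b + t) + b * x / ((t - b) * (b + t)) = (x * (t - b) + b * x) / ((t - b) * (b + t))"
        by (simp only: e1 add_divide_distrib)
      also have "x * (t - b) + b * x = x * t" by (simp add: algebra_simps)
      finally have "x / (b + t) + b * x / ((t - b) * (b + t)) = x * t / ((t - b) * (b + t))" .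
      then show ?thesis using D by simp
    qed
    show ?thesis using s1 s2 s3 by linarith
  qed
  ultimately show ?thesis by (simp add: t_def)
qed

definition PP :: "real \<Rightarrow> real \<Rightarrow> real \<Rightarrow> real" where
  "PP L R x = pi * sqrt ((R\<^sup>2 - x\<^sup>2) * (x\<^sup>2 - L\<^sup>2)) / (x + 1)"

lemma PP_cont: "0 \<le> L \<Longrightarrow> continuous_on {L..R} (PP L R)"
  unfolding PP_def[abs_def] by (intro continuous_intros) auto

lemma sq_facts:
  fixes L R :: real
  assumes "0 \<le> L" "L < 1" "1 < R"
  shows "L\<^sup>2 < 1" "1 < R\<^sup>2"
  using assms by (auto simp: abs_square_less_1 power_less_one_iff)

lemma PP_deriv:
  assumes "0 \<le> L" "L < 1" "1 < R"
  shows "\<exists>D. (PP L R has_real_derivative D) (at 1)"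
proof -
  have "0 < (R\<^sup>2 - 1\<^sup>2) * (1\<^sup>2 - L\<^sup>2)"
    using sq_facts[OF assms] by simp
  then show ?thesis unfolding PP_def[abs_def]
    by (intro exI) (auto intro!: derivative_eq_intros)
qed

lemma phi_PP:
  assumes "0 \<le> x" "x \<noteq> 1"
  shows "phi_integrand L R x = PP L R x / (x - 1)"
proof -
  have "x\<^sup>2 - 1 = (x + 1) * (x - 1)" by (simp add: algebra_simps power2_eq_square)
  then show ?thesis using assms by (simp add: phi_integrand_def PP_def)
qed

lemma Phi_eq:
  fixes L R c k :: real and n M0 :: "real \<Rightarrow> real"
  assumes LR: "0 \<le> L" "L < 1" "1 < R"
  and nc: "continuous_on {L..R} n" and nd: "(n has_real_derivative n') (at 1)"
  and P1: "PP L R 1 = c * n 1"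
  and M0c: "continuous_on {L..R} M0"
  and Md: "\<And>x. L < x \<Longrightarrow> x < R \<Longrightarrow> x \<noteq> 1 \<Longrightarrow>
      ((\<lambda>x. M0 x + k * ln ((x - 1)\<^sup>2)) has_real_derivative n x / (x - 1)) (at x)"
  shows "Phi L R = integral {L..R} (\<lambda>x. (PP L R x - c * n x) / (x - 1))
     + c * ((M0 R + k * ln ((R - 1)\<^sup>2)) - (M0 L + k * ln ((L - 1)\<^sup>2)))"
proof -
  obtain D where D: "(PP L R has_real_derivative D) (at 1)" using PP_deriv[OF LR] by blast
  have "((\<lambda>e. integral {L..1-e} (phi_integrand L R) + integral {1+e..R} (phi_integrand L R)) \<longlongrightarrow>
     integral {L..R} (\<lambda>x. (PP L R x - c * n x) / (x - 1))
       + c * ((M0 R + k * ln ((R - 1)\<^sup>2)) - (M0 L + k * ln ((L - 1)\<^sup>2)))) (at_right 0)"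
    by (rule pv_general[OF LR(2,3) PP_cont[OF LR(1)] nc D nd P1 M0c Md])
       (use LR in \<open>auto intro: phi_PP\<close>)
  then show ?thesis unfolding Phi_def by (intro tendsto_Lim) auto
qed

lemma ln_sq: "(a::real) \<noteq> 0 \<Longrightarrow> ln (a\<^sup>2) = 2 * ln \<bar>a\<bar>"
proof -
  assume "a \<noteq> 0"
  then have "ln (\<bar>a\<bar> ^ 2) = real 2 * ln \<bar>a\<bar>" by (intro ln_realpow; simp)
  then show ?thesis by (simp add: power2_abs)
qed

lemma ln_pm: "(1::real) < R \<Longrightarrow> ln (R + 1) + ln (R - 1) = ln (R\<^sup>2 - 1)"
proof -
  assume R: "1 < R"
  have "ln ((R + 1) * (R - 1)) = ln (R + 1) + ln (R - 1)" using R by (simp add: ln_mult)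
  moreover have "(R + 1) * (R - 1) = R\<^sup>2 - 1" by (simp add: algebra_simps power2_eq_square)
  ultimately show ?thesis by simp
qed

lemma ln_pm2: "0 \<le> (L::real) \<Longrightarrow> L < 1 \<Longrightarrow> ln (L + 1) + ln (1 - L) = ln (1 - L\<^sup>2)"
proof -
  assume L: "0 \<le> L" "L < 1"
  have "ln ((L + 1) * (1 - L)) = ln (L + 1) + ln (1 - L)" using L by (simp add: ln_mult)
  moreover have "(L + 1) * (1 - L) = 1 - L\<^sup>2" by (simp add: algebra_simps power2_eq_square)
  ultimately show ?thesis by simp
qed

definition G1 :: "real \<Rightarrow> real \<Rightarrow> real \<Rightarrow> real" where
  "G1 L R x = (PP L R x - pi * sqrt (1 - L\<^sup>2) * (x * sqrt (R\<^sup>2 - x\<^sup>2) / (x + 1))) / (x - 1)"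

definition U :: "real \<Rightarrow> real \<Rightarrow> real" where
  "U L R = sqrt (R\<^sup>2 - L\<^sup>2) - sqrt (R\<^sup>2 - 1) * ln (sqrt (R\<^sup>2 - 1) + sqrt (R\<^sup>2 - L\<^sup>2))
     + sqrt (R\<^sup>2 - 1) / 2 * ln (1 - L\<^sup>2)"

lemma Phi_p:
  assumes LR: "0 \<le> L" "L < 1" "1 < R"
  shows "Phi L R = integral {L..R} (G1 L R) - pi * sqrt (1 - L\<^sup>2) * U L R"
proof -
  define C where "C = sqrt (R\<^sup>2 - 1)"
  have sq: "L\<^sup>2 < 1" "1 < R\<^sup>2" using sq_facts[OF LR] by auto
  have C0: "C > 0" and C2: "C\<^sup>2 = R\<^sup>2 - 1" using sq by (auto simp: C_def)
  define n where "n x = x * sqrt (R\<^sup>2 - x\<^sup>2) / (x + 1)" for x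
  define M0 where "M0 x = sqrt (R\<^sup>2 - x\<^sup>2) - C * ln (C + sqrt (R\<^sup>2 - x\<^sup>2)) + C / 2 * ln (x + 1)" for x
  have nc: "continuous_on {L..R} n" unfolding n_def[abs_def] using LR
    by (intro continuous_intros) auto
  have "\<exists>D. (n has_real_derivative D) (at 1)"
    unfolding n_def[abs_def] using sq by (intro exI) (auto intro!: derivative_eq_intros)
  then obtain n' where nd: "(n has_real_derivative n') (at 1)" by blast
  have xR: "x\<^sup>2 \<le> R\<^sup>2" if "x \<in> {L..R}" for x
    using that LR by (intro power_mono) auto
  have M0c: "continuous_on {L..R} M0"
  proof -
    have "\<forall>x\<in>{L..R}. C + sqrt (R\<^sup>2 - x\<^sup>2) \<noteq> 0" using C0 xR
      by (metis add_pos_nonneg diff_ge_0_iff_ge less_irrefl real_sqrt_ge_zero)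
    moreover have "\<forall>x\<in>{L..R}. x + 1 \<noteq> 0" using LR by auto
    ultimately show ?thesis unfolding M0_def[abs_def]
      by (intro continuous_intros) auto
  qed
  have Md: "((\<lambda>x. M0 x + C / 4 * ln ((x - 1)\<^sup>2)) has_real_derivative n x / (x - 1)) (at x)"
    if "L < x" "x < R" "x \<noteq> 1" for x
    using M1_deriv[of L x R C] that LR C0 C2 unfolding M0_def n_def by auto
  have P1: "PP L R 1 = pi * sqrt (1 - L\<^sup>2) * n 1"
    by (simp add: PP_def n_def real_sqrt_mult mult.commute)
  have main: "Phi L R = integral {L..R} (\<lambda>x. (PP L R x - pi * sqrt (1 - L\<^sup>2) * n x) / (x - 1))
     + pi * sqrt (1 - L\<^sup>2) * ((M0 R + C / 4 * ln ((R - 1)\<^sup>2)) - (M0 L + C / 4 * ln ((L - 1)\<^sup>2)))"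
    by (rule Phi_eq[OF LR nc nd P1 M0c Md])
  have e1: "M0 R + C / 4 * ln ((R - 1)\<^sup>2) = 0"
  proof -
    have "ln ((R - 1)\<^sup>2) = 2 * ln (R - 1)" using LR by (simp add: ln_sq)
    moreover have "ln (R + 1) + ln (R - 1) = 2 * ln C"
      using ln_pm[OF LR(3)] C2[symmetric] C0 by (simp add: ln_sq)
    then have "C * ln (R + 1) + C * ln (R - 1) = 2 * (C * ln C)"
      by (metis distrib_left mult.left_commute)
    ultimately show ?thesis unfolding M0_def by simp
  qed
  have e2: "M0 L + C / 4 * ln ((L - 1)\<^sup>2) = U L R"
  proof -
    have "ln ((L - 1)\<^sup>2) = 2 * ln (1 - L)" using LR by (simp add: ln_sq)
    moreover have "C * ln (L + 1) + C * ln (1 - L) = C * ln (1 - L\<^sup>2)"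
      using ln_pm2[OF LR(1,2)] by (metis distrib_left)
    ultimately show ?thesis unfolding M0_def U_def C_def[symmetric]
      by simp
  qed
  have "(\<lambda>x. (PP L R x - pi * sqrt (1 - L\<^sup>2) * n x) / (x - 1)) = G1 L R"
    by (simp add: fun_eq_iff G1_def n_def)
  then show ?thesis using main e1 e2 by simp
qed

definition G2 :: "real \<Rightarrow> real \<Rightarrow> real \<Rightarrow> real" where
  "G2 L R x = (PP L R x - pi * sqrt (R\<^sup>2 - 1) * (x * sqrt (x\<^sup>2 - L\<^sup>2) / (x + 1))) / (x - 1)"

definition V :: "real \<Rightarrow> real \<Rightarrow> real" where
  "V L R = sqrt (R\<^sup>2 - L\<^sup>2) - sqrt (1 - L\<^sup>2) * ln (sqrt (1 - L\<^sup>2) + sqrt (R\<^sup>2 - L\<^sup>2))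
     + sqrt (1 - L\<^sup>2) / 2 * ln (R\<^sup>2 - 1)"

lemma Phi_q:
  assumes LR: "0 \<le> L" "L < 1" "1 < R"
  shows "Phi L R = integral {L..R} (G2 L R) + pi * sqrt (R\<^sup>2 - 1) * V L R"
proof -
  define b where "b = sqrt (1 - L\<^sup>2)"
  have sq: "L\<^sup>2 < 1" "1 < R\<^sup>2" using sq_facts[OF LR] by auto
  have b0: "b > 0" and b2: "b\<^sup>2 = 1 - L\<^sup>2" using sq by (auto simp: b_def)
  define n where "n x = x * sqrt (x\<^sup>2 - L\<^sup>2) / (x + 1)" for x
  define M0 where "M0 x = sqrt (x\<^sup>2 - L\<^sup>2) - b * ln (b + sqrt (x\<^sup>2 - L\<^sup>2)) + b / 2 * ln (x + 1)" for x
  have nc: "continuous_on {L..R} n" unfolding n_def[abs_def] using LR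
    by (intro continuous_intros) auto
  have "\<exists>D. (n has_real_derivative D) (at 1)"
    unfolding n_def[abs_def] using sq by (intro exI) (auto intro!: derivative_eq_intros)
  then obtain n' where nd: "(n has_real_derivative n') (at 1)" by blast
  have xL: "L\<^sup>2 \<le> x\<^sup>2" if "x \<in> {L..R}" for x
    using that LR by (intro power_mono) auto
  have M0c: "continuous_on {L..R} M0"
  proof -
    have "\<forall>x\<in>{L..R}. b + sqrt (x\<^sup>2 - L\<^sup>2) \<noteq> 0" using b0 xL
      by (metis add_pos_nonneg diff_ge_0_iff_ge less_irrefl real_sqrt_ge_zero)
    moreover have "\<forall>x\<in>{L..R}. x + 1 \<noteq> 0" using LR by auto
    ultimately show ?thesis unfolding M0_def[abs_def]
      by (intro continuous_intros) auto
  qed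
  have Md: "((\<lambda>x. M0 x + b / 4 * ln ((x - 1)\<^sup>2)) has_real_derivative n x / (x - 1)) (at x)"
    if "L < x" "x < R" "x \<noteq> 1" for x
    using M2_deriv[of L x b] that LR b0 b2 unfolding M0_def n_def by auto
  have P1: "PP L R 1 = pi * sqrt (R\<^sup>2 - 1) * n 1"
    by (simp add: PP_def n_def real_sqrt_mult)
  have main: "Phi L R = integral {L..R} (\<lambda>x. (PP L R x - pi * sqrt (R\<^sup>2 - 1) * n x) / (x - 1))
     + pi * sqrt (R\<^sup>2 - 1) * ((M0 R + b / 4 * ln ((R - 1)\<^sup>2)) - (M0 L + b / 4 * ln ((L - 1)\<^sup>2)))"
    by (rule Phi_eq[OF LR nc nd P1 M0c Md])
  have e1: "M0 L + b / 4 * ln ((L - 1)\<^sup>2) = 0"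
  proof -
    have "ln ((L - 1)\<^sup>2) = 2 * ln (1 - L)" using LR by (simp add: ln_sq)
    moreover have "ln (L + 1) + ln (1 - L) = 2 * ln b"
      using ln_pm2[OF LR(1,2)] b2[symmetric] b0 by (simp add: ln_sq)
    then have "b * ln (L + 1) + b * ln (1 - L) = 2 * (b * ln b)"
      by (metis distrib_left mult.left_commute)
    ultimately show ?thesis unfolding M0_def by simp
  qed
  have e2: "M0 R + b / 4 * ln ((R - 1)\<^sup>2) = V L R"
  proof -
    have "ln ((R - 1)\<^sup>2) = 2 * ln (R - 1)" using LR by (simp add: ln_sq)
    moreover have "b * ln (R + 1) + b * ln (R - 1) = b * ln (R\<^sup>2 - 1)"
      using ln_pm[OF LR(3)] by (metis distrib_left)
    ultimately show ?thesis unfolding M0_def V_def b_def[symmetric]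
      by (simp add: add.commute)
  qed
  have "(\<lambda>x. (PP L R x - pi * sqrt (R\<^sup>2 - 1) * n x) / (x - 1)) = G2 L R"
    by (simp add: fun_eq_iff G2_def n_def)
  then show ?thesis using main e1 e2 by simp
qed

lemma dsqrtR:
  fixes a R :: real
  assumes "a < R\<^sup>2"
  shows "((\<lambda>R. sqrt (R\<^sup>2 - a)) has_real_derivative R / sqrt (R\<^sup>2 - a)) (at R)"
  using assms by (auto intro!: derivative_eq_intros) (simp add: divide_inverse_commute)

lemma dsqrtL:
  fixes a L :: real
  assumes "L\<^sup>2 < a"
  shows "((\<lambda>L. sqrt (a - L\<^sup>2)) has_real_derivative - L / sqrt (a - L\<^sup>2)) (at L)"
  using assms by (auto intro!: derivative_eq_intros) (simp add: divide_inverse_commute)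

lemma U_alt: "U L R = sqrt (R\<^sup>2 - L\<^sup>2) - sqrt (R\<^sup>2 - 1) * ln (sqrt (R\<^sup>2 - 1) + sqrt (R\<^sup>2 - L\<^sup>2))
     + sqrt (R\<^sup>2 - 1) * (ln (1 - L\<^sup>2) / 2)"
  by (simp add: U_def)

lemma U_mono:
  assumes L: "0 \<le> L" "L < 1" and R: "1 < R1" "R1 < R2"
  shows "U L R2 < U L R1"
proof (rule DERIV_neg_imp_decreasing_open[OF R(2)])
  fix R assume R': "R1 < R" "R < R2"
  have sq: "L\<^sup>2 < 1" "1 < R\<^sup>2" using sq_facts[of L R] L R R' by auto
  define T where "T = sqrt (R\<^sup>2 - L\<^sup>2)"
  define C where "C = sqrt (R\<^sup>2 - 1)"
  define lb where "lb = ln (1 - L\<^sup>2) / 2"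
  have LR2: "L\<^sup>2 < R\<^sup>2" using sq by simp
  have T0: "T > 0" and C0: "C > 0" using sq LR2 by (auto simp: T_def C_def)
  have dT: "((\<lambda>R. sqrt (R\<^sup>2 - L\<^sup>2)) has_real_derivative R / T) (at R)"
    unfolding T_def by (rule dsqrtR[OF LR2])
  have dC: "((\<lambda>R. sqrt (R\<^sup>2 - 1)) has_real_derivative R / C) (at R)"
    unfolding C_def by (rule dsqrtR) (use sq in simp)
  have dCT: "((\<lambda>R. sqrt (R\<^sup>2 - 1) + sqrt (R\<^sup>2 - L\<^sup>2)) has_real_derivative R / C + R / T) (at R)"
    by (rule DERIV_add[OF dC dT])
  have dln: "((\<lambda>R. ln (sqrt (R\<^sup>2 - 1) + sqrt (R\<^sup>2 - L\<^sup>2))) has_real_derivative (R / C + R / T) / (C + T)) (at R)"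
  proof -
    have "0 < sqrt (R\<^sup>2 - 1) + sqrt (R\<^sup>2 - L\<^sup>2)" using C0 T0 unfolding C_def T_def by linarith
    from dln[OF dCT this] show ?thesis by (simp add: C_def T_def)
  qed
  have d: "((\<lambda>R. U L R) has_real_derivative
      R / T - ((R / C) * ln (C + T) + ((R / C + R / T) / (C + T)) * C) + (R / C) * lb) (at R)"
    unfolding U_alt lb_def[symmetric]
    using DERIV_add[OF DERIV_diff[OF dT DERIV_mult[OF dC dln]] DERIV_mult[OF dC DERIV_const[of lb]]]
    by (simp add: C_def T_def)
  have alg: "((R / C + R / T) / (C + T)) * C = R / T"
  proof -
    have "R / C + R / T = R * (C + T) / (C * T)" using C0 T0 by (simp add: field_simps)
    also have "\<dots> / (C + T) = R / (C * T)" using C0 T0 by simp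
    finally show ?thesis using C0 T0 by simp
  qed
  have "T > sqrt (1 - L\<^sup>2)" unfolding T_def using sq by (intro real_sqrt_less_mono) auto
  then have "ln (C + T) > ln (sqrt (1 - L\<^sup>2))" using C0 T0 sq by (intro ln_less_cancel_iff[THEN iffD2]) auto
  moreover have "ln (sqrt (1 - L\<^sup>2)) = lb" unfolding lb_def using sq by (simp add: ln_sqrt)
  ultimately have "lb - ln (C + T) < 0" by simp
  then have "R / C * (lb - ln (C + T)) < 0" using C0 sq R' R
    by (intro mult_pos_neg) auto
  then have "R / T - ((R / C) * ln (C + T) + ((R / C + R / T) / (C + T)) * C) + (R / C) * lb < 0"
    unfolding alg by (simp add: algebra_simps)
  then show "\<exists>y. ((\<lambda>R. U L R) has_real_derivative y) (at R) \<and> y < 0" using d by blast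
next
  have "\<forall>R\<in>{R1..R2}. sqrt (R\<^sup>2 - 1) + sqrt (R\<^sup>2 - L\<^sup>2) > 0"
  proof
    fix R assume "R \<in> {R1..R2}"
    then have "L\<^sup>2 < 1" "1 < R\<^sup>2" using R L sq_facts[of L R] by auto
    then have "0 < sqrt (R\<^sup>2 - 1)" "0 \<le> sqrt (R\<^sup>2 - L\<^sup>2)" by auto
    then show "sqrt (R\<^sup>2 - 1) + sqrt (R\<^sup>2 - L\<^sup>2) > 0" by linarith
  qed
  then show "continuous_on {R1..R2} (U L)" unfolding U_def[abs_def]
    by (intro continuous_intros) auto
qed

lemma V_alt: "V L R = sqrt (R\<^sup>2 - L\<^sup>2) - sqrt (1 - L\<^sup>2) * ln (sqrt (1 - L\<^sup>2) + sqrt (R\<^sup>2 - L\<^sup>2))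
     + sqrt (1 - L\<^sup>2) * (ln (R\<^sup>2 - 1) / 2)"
  by (simp add: V_def)

lemma V_mono:
  assumes L: "0 \<le> L1" "L1 < L2" "L2 < 1" and R: "1 < R"
  shows "V L1 R < V L2 R"
proof (rule DERIV_pos_imp_increasing_open[OF L(2)])
  fix L assume L': "L1 < L" "L < L2"
  have sq: "L\<^sup>2 < 1" "1 < R\<^sup>2" using sq_facts[of L R] L R L' by auto
  define T where "T = sqrt (R\<^sup>2 - L\<^sup>2)"
  define b where "b = sqrt (1 - L\<^sup>2)"
  define C where "C = sqrt (R\<^sup>2 - 1)"
  define lc where "lc = ln (R\<^sup>2 - 1) / 2"
  have LR2: "L\<^sup>2 < R\<^sup>2" using sq by simp
  have T0: "T > 0" and b0: "b > 0" and C0: "C > 0" using sq LR2 by (auto simp: T_def b_def C_def)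
  have dT: "((\<lambda>L. sqrt (R\<^sup>2 - L\<^sup>2)) has_real_derivative - L / T) (at L)"
    unfolding T_def by (rule dsqrtL[OF LR2])
  have db: "((\<lambda>L. sqrt (1 - L\<^sup>2)) has_real_derivative - L / b) (at L)"
    unfolding b_def by (rule dsqrtL) (use sq in simp)
  have dbT: "((\<lambda>L. sqrt (1 - L\<^sup>2) + sqrt (R\<^sup>2 - L\<^sup>2)) has_real_derivative - L / b + - L / T) (at L)"
    by (rule DERIV_add[OF db dT])
  have dl: "((\<lambda>L. ln (sqrt (1 - L\<^sup>2) + sqrt (R\<^sup>2 - L\<^sup>2))) has_real_derivative (- L / b + - L / T) / (b + T)) (at L)"
  proof -
    have "0 < sqrt (1 - L\<^sup>2) + sqrt (R\<^sup>2 - L\<^sup>2)" using b0 T0 unfolding b_def T_def by linarith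
    from dln[OF dbT this] show ?thesis by (simp add: b_def T_def)
  qed
  have d: "((\<lambda>L. V L R) has_real_derivative
      - L / T - ((- L / b) * ln (b + T) + ((- L / b + - L / T) / (b + T)) * b) + (- L / b) * lc) (at L)"
    unfolding V_alt lc_def[symmetric]
    using DERIV_add[OF DERIV_diff[OF dT DERIV_mult[OF db dl]] DERIV_mult[OF db DERIV_const[of lc]]]
    by (simp add: b_def T_def)
  have alg: "((- L / b + - L / T) / (b + T)) * b = - L / T"
  proof -
    have "- L / b + - L / T = - L * (b + T) / (b * T)" using b0 T0 by (simp add: field_simps)
    also have "\<dots> / (b + T) = - L / (b * T)" using b0 T0 by simp
    finally show ?thesis using b0 T0 by simp
  qed
  have "T > C" unfolding T_def C_def using sq by (intro real_sqrt_less_mono) auto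
  then have "ln (b + T) > ln C" using C0 T0 b0 by (intro ln_less_cancel_iff[THEN iffD2]) auto
  moreover have "ln C = lc" unfolding lc_def C_def using sq by (simp add: ln_sqrt)
  ultimately have "ln (b + T) - lc > 0" by simp
  moreover have "L / b > 0" using L L' b0 by simp
  ultimately have "L / b * (ln (b + T) - lc) > 0" by (intro mult_pos_pos)
  then have "- L / T - ((- L / b) * ln (b + T) + ((- L / b + - L / T) / (b + T)) * b) + (- L / b) * lc > 0"
    unfolding alg by (simp add: algebra_simps)
  then show "\<exists>y. ((\<lambda>L. V L R) has_real_derivative y) (at L) \<and> 0 < y" using d by blast
next
  have "\<forall>L\<in>{L1..L2}. sqrt (1 - L\<^sup>2) + sqrt (R\<^sup>2 - L\<^sup>2) > 0"
  proof
    fix L assume "L \<in> {L1..L2}"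
    then have "L\<^sup>2 < 1" "1 < R\<^sup>2" using R L sq_facts[of L R] by auto
    then have "0 < sqrt (1 - L\<^sup>2)" "0 \<le> sqrt (R\<^sup>2 - L\<^sup>2)" by auto
    then show "sqrt (1 - L\<^sup>2) + sqrt (R\<^sup>2 - L\<^sup>2) > 0" by linarith
  qed
  then show "continuous_on {L1..L2} (\<lambda>L. V L R)" unfolding V_def
    by (intro continuous_intros) auto
qed

lemma PP_form:
  assumes "0 \<le> L" "L \<le> x" "x \<le> R"
  shows "PP L R x = pi * sqrt (R\<^sup>2 - x\<^sup>2) * sqrt (x\<^sup>2 - L\<^sup>2) / (x + 1)"
  by (simp add: PP_def real_sqrt_mult)

definition E1 :: "real \<Rightarrow> real \<Rightarrow> real" where
  "E1 L x = (sqrt (x\<^sup>2 - L\<^sup>2) - sqrt (1 - L\<^sup>2) * x) / ((x + 1) * (x - 1))"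

definition E2 :: "real \<Rightarrow> real \<Rightarrow> real" where
  "E2 R x = (sqrt (R\<^sup>2 - x\<^sup>2) - sqrt (R\<^sup>2 - 1) * x) / ((x + 1) * (x - 1))"

lemma G1_form:
  assumes "0 \<le> L" "L \<le> x" "x \<le> R"
  shows "G1 L R x = pi * sqrt (R\<^sup>2 - x\<^sup>2) * E1 L x"
proof -
  have "x + 1 \<noteq> 0" using assms by simp
  then show ?thesis using assms
    unfolding G1_def E1_def PP_form[OF assms]
    by (simp add: divide_simps) (simp add: algebra_simps)
qed

lemma G2_form:
  assumes "0 \<le> L" "L \<le> x" "x \<le> R"
  shows "G2 L R x = pi * sqrt (x\<^sup>2 - L\<^sup>2) * E2 R x"
proof -
  have "x + 1 \<noteq> 0" using assms by simp
  then show ?thesis using assms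
    unfolding G2_def E2_def PP_form[OF assms]
    by (simp add: divide_simps) (simp add: algebra_simps)
qed

lemma E1_nonneg:
  assumes "0 \<le> L" "L < 1" "L \<le> x"
  shows "0 \<le> E1 L x"
proof -
  have x0: "0 \<le> x" using assms by simp
  have key: "(x\<^sup>2 - L\<^sup>2) - (1 - L\<^sup>2) * x\<^sup>2 = L\<^sup>2 * (x\<^sup>2 - 1)" by (simp add: algebra_simps)
  have bx: "sqrt (1 - L\<^sup>2) * x = sqrt ((1 - L\<^sup>2) * x\<^sup>2)" using x0 by (simp add: real_sqrt_mult)
  consider "x < 1" | "x = 1" | "x > 1" by linarith
  then show ?thesis
  proof cases
    case 1
    then have "x\<^sup>2 \<le> 1" using x0 by (simp add: power_le_one)
    then have "x\<^sup>2 - L\<^sup>2 \<le> (1 - L\<^sup>2) * x\<^sup>2" using key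
      by (metis diff_ge_0_iff_ge mult_nonneg_nonpos zero_le_power2 diff_le_0_iff_le)
    then have "sqrt (x\<^sup>2 - L\<^sup>2) - sqrt (1 - L\<^sup>2) * x \<le> 0" unfolding bx by simp
    moreover have "(x + 1) * (x - 1) < 0" using 1 x0 by (simp add: mult_pos_neg)
    ultimately show ?thesis unfolding E1_def by (simp add: divide_nonpos_neg)
  next
    case 2 then show ?thesis by (simp add: E1_def)
  next
    case 3
    then have "x\<^sup>2 \<ge> 1" by (simp add: one_le_power)
    then have "0 \<le> L\<^sup>2 * (x\<^sup>2 - 1)" by simp
    then have "x\<^sup>2 - L\<^sup>2 \<ge> (1 - L\<^sup>2) * x\<^sup>2" using key by linarith
    then have "sqrt (x\<^sup>2 - L\<^sup>2) - sqrt (1 - L\<^sup>2) * x \<ge> 0" unfolding bx by simp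
    moreover have "(x + 1) * (x - 1) > 0" using 3 by simp
    ultimately show ?thesis unfolding E1_def by simp
  qed
qed

lemma E2_nonpos:
  assumes "1 < R" "0 \<le> x" "x \<le> R"
  shows "E2 R x \<le> 0"
proof -
  have key: "(R\<^sup>2 - x\<^sup>2) - (R\<^sup>2 - 1) * x\<^sup>2 = R\<^sup>2 * (1 - x\<^sup>2)" by (simp add: algebra_simps)
  have "1 < R\<^sup>2" using assms by (simp add: one_less_power)
  then have bx: "sqrt (R\<^sup>2 - 1) * x = sqrt ((R\<^sup>2 - 1) * x\<^sup>2)" using assms by (simp add: real_sqrt_mult)
  consider "x < 1" | "x = 1" | "x > 1" by linarith
  then show ?thesis
  proof cases
    case 1
    then have "x\<^sup>2 \<le> 1" using assms by (simp add: power_le_one)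
    then have "0 \<le> R\<^sup>2 * (1 - x\<^sup>2)" by simp
    then have "R\<^sup>2 - x\<^sup>2 \<ge> (R\<^sup>2 - 1) * x\<^sup>2" using key by linarith
    then have "sqrt (R\<^sup>2 - x\<^sup>2) - sqrt (R\<^sup>2 - 1) * x \<ge> 0" unfolding bx by simp
    moreover have "(x + 1) * (x - 1) < 0" using 1 assms by (simp add: mult_pos_neg)
    ultimately show ?thesis unfolding E2_def by (simp add: divide_nonneg_neg)
  next
    case 2 then show ?thesis by (simp add: E2_def)
  next
    case 3
    then have "x\<^sup>2 \<ge> 1" by (simp add: one_le_power)
    then have "R\<^sup>2 - x\<^sup>2 \<le> (R\<^sup>2 - 1) * x\<^sup>2" using key
      by (metis diff_ge_0_iff_ge mult_nonneg_nonpos zero_le_power2 diff_le_0_iff_le)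
    then have "sqrt (R\<^sup>2 - x\<^sup>2) - sqrt (R\<^sup>2 - 1) * x \<le> 0" unfolding bx by simp
    moreover have "(x + 1) * (x - 1) > 0" using 3 by simp
    ultimately show ?thesis unfolding E2_def by (simp add: divide_nonpos_pos)
  qed
qed

lemma G1_int:
  assumes LR: "0 \<le> L" "L < 1" "1 < R"
  shows "G1 L R integrable_on {L..R}"
proof -
  have sq: "L\<^sup>2 < 1" "1 < R\<^sup>2" using sq_facts[OF LR] by auto
  define n where "n x = x * sqrt (R\<^sup>2 - x\<^sup>2) / (x + 1)" for x
  have nc: "continuous_on {L..R} n" unfolding n_def[abs_def] using LR
    by (intro continuous_intros) auto
  have "\<exists>D. (n has_real_derivative D) (at 1)"
    unfolding n_def[abs_def] using sq by (intro exI) (auto intro!: derivative_eq_intros)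
  then obtain n' where nd: "(n has_real_derivative n') (at 1)" by blast
  obtain D where D: "(PP L R has_real_derivative D) (at 1)" using PP_deriv[OF LR] by blast
  have P1: "PP L R 1 = pi * sqrt (1 - L\<^sup>2) * n 1"
    by (simp add: PP_def n_def real_sqrt_mult mult.commute)
  have "(\<lambda>x. (PP L R x - pi * sqrt (1 - L\<^sup>2) * n x) / (x - 1)) integrable_on {L..R}"
    by (rule G_integrable[OF PP_cont[OF LR(1)] nc D nd P1])
  moreover have "(\<lambda>x. (PP L R x - pi * sqrt (1 - L\<^sup>2) * n x) / (x - 1)) = G1 L R"
    by (simp add: fun_eq_iff G1_def n_def)
  ultimately show ?thesis by simp
qed

lemma G2_int:
  assumes LR: "0 \<le> L" "L < 1" "1 < R"
  shows "G2 L R integrable_on {L..R}"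
proof -
  have sq: "L\<^sup>2 < 1" "1 < R\<^sup>2" using sq_facts[OF LR] by auto
  define n where "n x = x * sqrt (x\<^sup>2 - L\<^sup>2) / (x + 1)" for x
  have nc: "continuous_on {L..R} n" unfolding n_def[abs_def] using LR
    by (intro continuous_intros) auto
  have "\<exists>D. (n has_real_derivative D) (at 1)"
    unfolding n_def[abs_def] using sq by (intro exI) (auto intro!: derivative_eq_intros)
  then obtain n' where nd: "(n has_real_derivative n') (at 1)" by blast
  obtain D where D: "(PP L R has_real_derivative D) (at 1)" using PP_deriv[OF LR] by blast
  have P1: "PP L R 1 = pi * sqrt (R\<^sup>2 - 1) * n 1"
    by (simp add: PP_def n_def real_sqrt_mult)
  have "(\<lambda>x. (PP L R x - pi * sqrt (R\<^sup>2 - 1) * n x) / (x - 1)) integrable_on {L..R}"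
    by (rule G_integrable[OF PP_cont[OF LR(1)] nc D nd P1])
  moreover have "(\<lambda>x. (PP L R x - pi * sqrt (R\<^sup>2 - 1) * n x) / (x - 1)) = G2 L R"
    by (simp add: fun_eq_iff G2_def n_def)
  ultimately show ?thesis by simp
qed

lemma Phi_mono_R:
  assumes L: "0 \<le> L" "L < 1" and R: "1 < R1" "R1 < R2"
  shows "Phi L R1 < Phi L R2"
proof -
  have i1: "G1 L R1 integrable_on {L..R1}" using G1_int L R by auto
  have i2: "G1 L R2 integrable_on {L..R2}" using G1_int L R by auto
  have i2': "G1 L R2 integrable_on {L..R1}" using integrable_on_subinterval[OF i2, of L R1] R by auto
  have i2'': "G1 L R2 integrable_on {R1..R2}" using integrable_on_subinterval[OF i2, of R1 R2] L R by auto
  have comb: "integral {L..R1} (G1 L R2) + integral {R1..R2} (G1 L R2) = integral {L..R2} (G1 L R2)"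
    using L R i2 by (intro Henstock_Kurzweil_Integration.integral_combine) auto
  have le: "integral {L..R1} (G1 L R1) \<le> integral {L..R1} (G1 L R2)"
  proof (rule integral_le[OF i1 i2'])
    fix x assume x: "x \<in> {L..R1}"
    have "sqrt (R1\<^sup>2 - x\<^sup>2) \<le> sqrt (R2\<^sup>2 - x\<^sup>2)" using R L
      by (intro real_sqrt_le_mono) (auto intro!: power_mono)
    then have "pi * sqrt (R1\<^sup>2 - x\<^sup>2) * E1 L x \<le> pi * sqrt (R2\<^sup>2 - x\<^sup>2) * E1 L x"
      using E1_nonneg[of L x] x L by (intro mult_right_mono) auto
    then show "G1 L R1 x \<le> G1 L R2 x" using G1_form[of L x R1] G1_form[of L x R2] x L R by auto
  qed
  have nn: "0 \<le> integral {R1..R2} (G1 L R2)"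
  proof (rule integral_nonneg[OF i2''])
    fix x assume x: "x \<in> {R1..R2}"
    have "0 \<le> pi * sqrt (R2\<^sup>2 - x\<^sup>2) * E1 L x"
      using E1_nonneg[of L x] x L R by (intro mult_nonneg_nonneg) (auto intro!: power_mono)
    then show "0 \<le> G1 L R2 x" using G1_form[of L x R2] x L R by auto
  qed
  have U: "U L R2 < U L R1" by (rule U_mono[OF L R])
  have "pi * sqrt (1 - L\<^sup>2) > 0" using sq_facts[of L R1] L R by auto
  then have "pi * sqrt (1 - L\<^sup>2) * U L R2 < pi * sqrt (1 - L\<^sup>2) * U L R1" using U by (intro mult_strict_left_mono)
  then show ?thesis using Phi_p[of L R1] Phi_p[of L R2] L R le nn comb by linarith
qed

lemma Phi_mono_L:
  assumes L: "0 \<le> L1" "L1 < L2" "L2 < 1" and R: "1 < R"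
  shows "Phi L1 R < Phi L2 R"
proof -
  have i1: "G2 L1 R integrable_on {L1..R}" using G2_int L R by auto
  have i2: "G2 L2 R integrable_on {L2..R}" using G2_int L R by auto
  have i1a: "G2 L1 R integrable_on {L1..L2}" using integrable_on_subinterval[OF i1, of L1 L2] L R by auto
  have i1b: "G2 L1 R integrable_on {L2..R}" using integrable_on_subinterval[OF i1, of L2 R] L R by auto
  have comb: "integral {L1..L2} (G2 L1 R) + integral {L2..R} (G2 L1 R) = integral {L1..R} (G2 L1 R)"
    using L R i1 by (intro Henstock_Kurzweil_Integration.integral_combine) auto
  have le: "integral {L2..R} (G2 L1 R) \<le> integral {L2..R} (G2 L2 R)"
  proof (rule integral_le[OF i1b i2])
    fix x assume x: "x \<in> {L2..R}"
    have "sqrt (x\<^sup>2 - L2\<^sup>2) \<le> sqrt (x\<^sup>2 - L1\<^sup>2)" using R L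
      by (intro real_sqrt_le_mono) (auto intro!: power_mono)
    then have "pi * sqrt (x\<^sup>2 - L1\<^sup>2) * E2 R x \<le> pi * sqrt (x\<^sup>2 - L2\<^sup>2) * E2 R x"
      using E2_nonpos[of R x] x L R by (intro mult_right_mono_neg) auto
    then show "G2 L1 R x \<le> G2 L2 R x" using G2_form[of L1 x R] G2_form[of L2 x R] x L R by auto
  qed
  have np: "integral {L1..L2} (G2 L1 R) \<le> 0"
  proof -
    have "integral {L1..L2} (G2 L1 R) \<le> integral {L1..L2} (\<lambda>x. 0)"
    proof (rule integral_le[OF i1a])
      fix x assume x: "x \<in> {L1..L2}"
      have "pi * sqrt (x\<^sup>2 - L1\<^sup>2) * E2 R x \<le> 0"
        using E2_nonpos[of R x] x L R by (intro mult_nonneg_nonpos) auto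
      then show "G2 L1 R x \<le> 0" using G2_form[of L1 x R] x L R by auto
    qed auto
    then show ?thesis by simp
  qed
  have V: "V L1 R < V L2 R" by (rule V_mono[OF L R])
  have "pi * sqrt (R\<^sup>2 - 1) > 0" using sq_facts[of L1 R] L R by auto
  then have "pi * sqrt (R\<^sup>2 - 1) * V L1 R < pi * sqrt (R\<^sup>2 - 1) * V L2 R" using V by (intro mult_strict_left_mono)
  then show ?thesis using Phi_q[of L1 R] Phi_q[of L2 R] L R le np comb by linarith
qed

lemma integral_pos_pt:
  fixes f :: "real \<Rightarrow> real"
  assumes fi: "f integrable_on {a..b}" and nn: "\<And>x. x \<in> {a..b} \<Longrightarrow> 0 \<le> f x"
  and x0: "a < x0" "x0 < b" and c: "isCont f x0" and pos: "f x0 > 0"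
  shows "integral {a..b} f > 0"
proof -
  obtain d where d: "d > 0" "\<And>y. dist y x0 < d \<Longrightarrow> dist (f y) (f x0) < f x0 / 2"
    using c pos unfolding continuous_at_eps_delta by (metis half_gt_zero)
  define h where "h = min d (min (x0 - a) (b - x0)) / 2"
  have hb: "h \<le> (x0 - a) / 2" "h \<le> (b - x0) / 2" "h \<le> d / 2" by (auto simp: h_def min_def)
  have h: "h > 0" "h < d" "a < x0 - h" "x0 + h < b" using d x0 hb by (auto simp: h_def)
  have gt: "f y > f x0 / 2" if "y \<in> {x0 - h..x0 + h}" for y
  proof -
    have "dist y x0 < d" using that h by (auto simp: dist_real_def)
    then have "\<bar>f y - f x0\<bar> < f x0 / 2" using d(2) by (simp add: dist_real_def)
    then show ?thesis by linarith
  qed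
  have i1: "f integrable_on {a..x0 - h}" using integrable_on_subinterval[OF fi] h by auto
  have i2: "f integrable_on {x0 - h..x0 + h}" using integrable_on_subinterval[OF fi] h by auto
  have i3: "f integrable_on {x0 + h..b}" using integrable_on_subinterval[OF fi] h by auto
  have i23: "f integrable_on {x0 - h..b}" using integrable_on_subinterval[OF fi] h by auto
  have c1: "integral {a..x0 - h} f + integral {x0 - h..b} f = integral {a..b} f"
    using h fi by (intro Henstock_Kurzweil_Integration.integral_combine) auto
  have c2: "integral {x0 - h..x0 + h} f + integral {x0 + h..b} f = integral {x0 - h..b} f"
    using h i23 by (intro Henstock_Kurzweil_Integration.integral_combine) auto
  have "integral {x0 - h..x0 + h} (\<lambda>x. f x0 / 2) \<le> integral {x0 - h..x0 + h} f"
    by (rule integral_le[OF _ i2]) (use gt in \<open>auto intro: less_imp_le\<close>)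
  moreover have "integral {x0 - h..x0 + h} (\<lambda>x. f x0 / 2) = 2 * h * (f x0 / 2)" using h by simp
  moreover have "0 \<le> integral {a..x0 - h} f" using h nn by (intro integral_nonneg[OF i1]) auto
  moreover have "0 \<le> integral {x0 + h..b} f" using h nn by (intro integral_nonneg[OF i3]) auto
  moreover have "2 * h * (f x0 / 2) > 0" using h pos by simp
  ultimately show ?thesis using c1 c2 by linarith
qed

lemma Phi0:
  assumes R: "1 < R"
  shows "Phi 0 R = - pi * U 0 R"
proof -
  have "integral {0..R} (G1 0 R) = integral {0..R} (\<lambda>x. 0)"
  proof (rule integral_cong)
    fix x assume x: "x \<in> {0..R}"
    then have "E1 0 x = 0" by (simp add: E1_def)
    then show "G1 0 R x = 0" using G1_form[of 0 x R] x by simp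
  qed
  then show ?thesis using Phi_p[of 0 R] R by simp
qed

lemma U0_pos: "U 0 (5/4) > 0"
proof -
  have s1: "sqrt ((5/4)\<^sup>2 - 1) = 3/4" by (rule real_sqrt_unique) (simp_all add: power2_eq_square)
  have s2: "sqrt ((5/4)\<^sup>2 - 0\<^sup>2) = (5/4::real)" by simp
  have "ln (2::real) \<le> 1" using ln_le_minus_one[of 2] by simp
  then show ?thesis unfolding U_def s1 s2 by simp
qed

lemma U0_neg: "U 0 (41/9) < 0"
proof -
  have s1: "sqrt ((41/9)\<^sup>2 - 1) = 40/9" by (rule real_sqrt_unique) (simp_all add: power2_eq_square)
  have s2: "sqrt ((41/9)\<^sup>2 - 0\<^sup>2) = (41/9::real)" by simp
  have "ln (1/3::real) \<le> 1/3 - 1" by (rule ln_le_minus_one) simp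
  then have l3: "ln (3::real) \<ge> 2/3" by (simp add: ln_div)
  have "ln (9::real) = ln 3 + ln 3" using ln_mult[of 3 3] by simp
  then have "ln (9::real) \<ge> 4/3" using l3 by simp
  then show ?thesis unfolding U_def s1 s2 by simp
qed

lemma U0_cont: "continuous_on {5/4..41/9} (U 0)"
proof -
  have "\<forall>R\<in>{5/4..41/9::real}. sqrt (R\<^sup>2 - 1) + sqrt (R\<^sup>2 - 0\<^sup>2) \<noteq> 0"
  proof
    fix R :: real assume "R \<in> {5/4..41/9}"
    then have "0 < sqrt (R\<^sup>2 - 0\<^sup>2)" by auto
    moreover have "0 \<le> sqrt (R\<^sup>2 - 1)" using \<open>R \<in> _\<close> by (auto simp: one_le_power)
    ultimately show "sqrt (R\<^sup>2 - 1) + sqrt (R\<^sup>2 - 0\<^sup>2) \<noteq> 0" by linarith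
  qed
  then show ?thesis unfolding U_def[abs_def] by (intro continuous_intros) auto
qed

lemma root_exists: "\<exists>Rc>1. Phi 0 Rc = 0"
proof -
  have "\<exists>x\<ge>5/4. x \<le> 41/9 \<and> U 0 x = 0"
    by (rule IVT2'[of "U 0" "41/9" 0 "5/4"]) (use U0_pos U0_neg U0_cont in auto)
  then obtain x where x: "5/4 \<le> x" "x \<le> 41/9" "U 0 x = 0" by blast
  then have "Phi 0 x = 0" using Phi0[of x] by simp
  then show ?thesis using x by (intro exI[of _ x]) auto
qed

lemma alg_key:
  fixes s B w :: real
  assumes s: "s \<noteq> 0" and e: "s\<^sup>2 = (B - w) * (B + w)" and bw: "B + w \<noteq> 0"
  shows "- s / (B + w) + B / s = w / s"
proof -
  have "B - w \<noteq> 0" using s e by auto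
  then have "- s / (B + w) = (- s * (B - w)) / ((B - w) * (B + w))" by simp
  also have "\<dots> = (- s * (B - w)) / (s * s)" using e by (simp add: power2_eq_square)
  also have "\<dots> = (w - B) / s" using s by (simp add: field_simps)
  finally have "- s / (B + w) = (w - B) / s" .
  moreover have "(w - B) / s + B / s = w / s" by (simp add: add_divide_distrib[symmetric])
  ultimately show ?thesis by simp
qed

lemma dsqrt_comp:
  fixes f :: "real \<Rightarrow> real"
  assumes "(f has_real_derivative D) (at x)" "0 < f x"
  shows "((\<lambda>x. sqrt (f x)) has_real_derivative D / (2 * sqrt (f x))) (at x)"
proof -
  have "inverse (sqrt (f x)) / 2 * D = D / (2 * sqrt (f x))" by (simp add: divide_simps)
  then show ?thesis using DERIV_chain2[OF DERIV_real_sqrt[OF assms(2)] assms(1)] by (simp add: mult.commute)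
qed

lemma M3_deriv:
  fixes L R x B :: real
  assumes x: "0 \<le> L" "L < x" "x < R" "x \<noteq> 1" and B: "B > 0" "L\<^sup>2 = 1 - B" "R\<^sup>2 = 1 + B"
  shows "((\<lambda>x. pi / 2 * (sqrt ((R\<^sup>2 - x\<^sup>2) * (x\<^sup>2 - L\<^sup>2)) - B * ln (B + sqrt ((R\<^sup>2 - x\<^sup>2) * (x\<^sup>2 - L\<^sup>2)))
        + B * ln (x + 1)) + pi * B / 4 * ln ((x - 1)\<^sup>2))
     has_real_derivative (x * PP L R x) / (x - 1)) (at x)"
proof -
  define w where "w = sqrt ((R\<^sup>2 - x\<^sup>2) * (x\<^sup>2 - L\<^sup>2))"
  have x0: "0 < x" using x by simp
  have "x\<^sup>2 < R\<^sup>2" "L\<^sup>2 < x\<^sup>2" using x by (auto intro!: power_strict_mono)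
  then have u0: "0 < (R\<^sup>2 - x\<^sup>2) * (x\<^sup>2 - L\<^sup>2)" by simp
  then have w0: "w > 0" by (simp add: w_def)
  have w2: "w\<^sup>2 = (R\<^sup>2 - x\<^sup>2) * (x\<^sup>2 - L\<^sup>2)" using u0 by (simp add: w_def)
  have du: "((\<lambda>x. (R\<^sup>2 - x\<^sup>2) * (x\<^sup>2 - L\<^sup>2)) has_real_derivative 4 * x * (1 - x\<^sup>2)) (at x)"
  proof -
    have "((\<lambda>x. (R\<^sup>2 - x\<^sup>2) * (x\<^sup>2 - L\<^sup>2)) has_real_derivative (- (2 * x)) * (x\<^sup>2 - L\<^sup>2) + (R\<^sup>2 - x\<^sup>2) * (2 * x)) (at x)"
      by (auto intro!: derivative_eq_intros)
    moreover have "(- (2 * x)) * (x\<^sup>2 - L\<^sup>2) + (R\<^sup>2 - x\<^sup>2) * (2 * x) = 4 * x * (1 - x\<^sup>2)"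
      unfolding B(2,3) by (simp add: algebra_simps)
    ultimately show ?thesis by simp
  qed
  have dw: "((\<lambda>x. sqrt ((R\<^sup>2 - x\<^sup>2) * (x\<^sup>2 - L\<^sup>2))) has_real_derivative (4 * x * (1 - x\<^sup>2)) / (2 * w)) (at x)"
    using dsqrt_comp[OF du u0] by (simp add: w_def)
  define dw' where "dw' = (4 * x * (1 - x\<^sup>2)) / (2 * w)"
  have a: "((\<lambda>x. B + sqrt ((R\<^sup>2 - x\<^sup>2) * (x\<^sup>2 - L\<^sup>2))) has_real_derivative dw') (at x)"
    using DERIV_add[OF DERIV_const dw] by (simp add: dw'_def)
  have bb: "((\<lambda>x. ln (B + sqrt ((R\<^sup>2 - x\<^sup>2) * (x\<^sup>2 - L\<^sup>2)))) has_real_derivative dw' / (B + w)) (at x)"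
  proof -
    have "0 < B + sqrt ((R\<^sup>2 - x\<^sup>2) * (x\<^sup>2 - L\<^sup>2))" using B w0 unfolding w_def by linarith
    from dln[OF a this] show ?thesis by (simp add: w_def)
  qed
  have c: "((\<lambda>x. ln (x + 1)) has_real_derivative 1 / (x + 1)) (at x)"
  proof -
    have "((\<lambda>x. x + 1) has_real_derivative 1) (at x)" by (auto intro!: derivative_eq_intros)
    from dln[OF this] x0 show ?thesis by simp
  qed
  have d: "((\<lambda>x. pi / 2 * (sqrt ((R\<^sup>2 - x\<^sup>2) * (x\<^sup>2 - L\<^sup>2)) - B * ln (B + sqrt ((R\<^sup>2 - x\<^sup>2) * (x\<^sup>2 - L\<^sup>2)))
        + B * ln (x + 1)) + pi * B / 4 * ln ((x - 1)\<^sup>2))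
     has_real_derivative pi / 2 * (dw' - B * (dw' / (B + w)) + B * (1 / (x + 1))) + pi * B / 4 * (2 / (x - 1))) (at x)"
    unfolding dw'_def
    by (intro DERIV_add DERIV_diff DERIV_cmult dw bb[unfolded dw'_def] c dlnsq) (use x in auto)
  have eq: "pi / 2 * (dw' - B * (dw' / (B + w)) + B * (1 / (x + 1))) + pi * B / 4 * (2 / (x - 1))
      = (x * PP L R x) / (x - 1)"
  proof -
    define s where "s = x\<^sup>2 - 1"
    have x1: "x + 1 \<noteq> 0" "x - 1 \<noteq> 0" using x0 x by auto
    have xx: "(x + 1) * (x - 1) = s" by (simp add: s_def algebra_simps power2_eq_square)
    have s0: "s \<noteq> 0" using x1 xx by auto
    have e: "s\<^sup>2 = (B - w) * (B + w)"
      using w2 unfolding s_def B(2,3) by (simp add: algebra_simps power2_eq_square)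
    have bw: "B + w \<noteq> 0" "w \<noteq> 0" using B w0 by auto
    have t1: "dw' - B * (dw' / (B + w)) = 2 * x * (- s) / (B + w)"
    proof -
      have "dw' - B * (dw' / (B + w)) = dw' * (1 - B / (B + w))" by (simp add: algebra_simps)
      also have "1 - B / (B + w) = w / (B + w)" using bw by (simp add: field_simps)
      also have "dw' * (w / (B + w)) = (dw' * w) / (B + w)" by simp
      also have "dw' * w = 2 * x * (- s)" using bw unfolding dw'_def s_def by simp
      finally show ?thesis .
    qed
    have t2: "pi / 2 * (B * (1 / (x + 1))) + pi * B / 4 * (2 / (x - 1)) = pi / 2 * (2 * x * (B / s))"
    proof -
      have h1: "pi * B / 4 * (2 / (x - 1)) = pi / 2 * (B / (x - 1))" by simp
      have "B * (1 / (x + 1)) + B / (x - 1) = B * (2 * x) / ((x + 1) * (x - 1))"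
        using x1 by (simp add: field_simps)
      then have h2: "B * (1 / (x + 1)) + B / (x - 1) = 2 * x * (B / s)" unfolding xx by simp
      show ?thesis by (simp only: h1 distrib_left[symmetric] h2)
    qed
    have "pi / 2 * (dw' - B * (dw' / (B + w)) + B * (1 / (x + 1))) + pi * B / 4 * (2 / (x - 1))
        = pi / 2 * (dw' - B * (dw' / (B + w))) + (pi / 2 * (B * (1 / (x + 1))) + pi * B / 4 * (2 / (x - 1)))"
      by (simp add: distrib_left)
    also have "\<dots> = pi / 2 * (2 * x * (- s) / (B + w)) + pi / 2 * (2 * x * (B / s))" unfolding t1 t2 ..
    also have "\<dots> = pi / 2 * (2 * x * (- s) / (B + w) + 2 * x * (B / s))"
      by (simp only: distrib_left)
    also have "\<dots> = pi * x * (- s / (B + w) + B / s)"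
    proof -
      have "2 * x * (- s) / (B + w) + 2 * x * (B / s) = (2 * x) * (- s / (B + w) + B / s)"
        by (simp add: right_diff_distrib distrib_left)
      then show ?thesis by simp
    qed
    also have "\<dots> = pi * x * (w / s)" using alg_key[OF s0 e bw(1)] by simp
    also have "\<dots> = (x * PP L R x) / (x - 1)"
    proof -
      have "PP L R x = pi * w / (x + 1)" by (simp add: PP_def w_def)
      then have "(x * PP L R x) / (x - 1) = pi * x * w / ((x + 1) * (x - 1))" by simp
      then show ?thesis unfolding xx by simp
    qed
    finally show ?thesis .
  qed
  show ?thesis using d eq by simp
qed


lemma M4_deriv:
  fixes x d :: real
  assumes x: "\<bar>x - 1\<bar> < d" "x \<noteq> 1"
  shows "((\<lambda>x. pi * (sqrt (d\<^sup>2 - (x - 1)\<^sup>2) - d * ln (d + sqrt (d\<^sup>2 - (x - 1)\<^sup>2)))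
        + pi * d / 2 * ln ((x - 1)\<^sup>2))
     has_real_derivative (pi * sqrt (d\<^sup>2 - (x - 1)\<^sup>2)) / (x - 1)) (at x)"
proof -
  define v where "v = sqrt (d\<^sup>2 - (x - 1)\<^sup>2)"
  have d0: "d > 0" using x by linarith
  have "\<not> d\<^sup>2 \<le> (x - 1)\<^sup>2" using abs_le_square_iff[of d "x - 1"] x d0 by auto
  then have u0: "0 < d\<^sup>2 - (x - 1)\<^sup>2" by simp
  then have v0: "v > 0" by (simp add: v_def)
  have v2: "v\<^sup>2 = d\<^sup>2 - (x - 1)\<^sup>2" using u0 by (simp add: v_def)
  have du: "((\<lambda>x. d\<^sup>2 - (x - 1)\<^sup>2) has_real_derivative - (2 * (x - 1))) (at x)"
    by (auto intro!: derivative_eq_intros)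
  define dv where "dv = - (2 * (x - 1)) / (2 * v)"
  have dvv: "((\<lambda>x. sqrt (d\<^sup>2 - (x - 1)\<^sup>2)) has_real_derivative dv) (at x)"
    using dsqrt_comp[OF du u0] by (simp add: v_def dv_def)
  have a: "((\<lambda>x. d + sqrt (d\<^sup>2 - (x - 1)\<^sup>2)) has_real_derivative dv) (at x)"
    using DERIV_add[OF DERIV_const dvv] by simp
  have bb: "((\<lambda>x. ln (d + sqrt (d\<^sup>2 - (x - 1)\<^sup>2))) has_real_derivative dv / (d + v)) (at x)"
  proof -
    have "0 < d + sqrt (d\<^sup>2 - (x - 1)\<^sup>2)" using d0 v0 unfolding v_def by linarith
    from dln[OF a this] show ?thesis by (simp add: v_def)
  qed
  have dd: "((\<lambda>x. pi * (sqrt (d\<^sup>2 - (x - 1)\<^sup>2) - d * ln (d + sqrt (d\<^sup>2 - (x - 1)\<^sup>2)))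
        + pi * d / 2 * ln ((x - 1)\<^sup>2))
     has_real_derivative pi * (dv - d * (dv / (d + v))) + pi * d / 2 * (2 / (x - 1))) (at x)"
    by (intro DERIV_add DERIV_diff DERIV_cmult dvv bb dlnsq) (use x in auto)
  have eq: "pi * (dv - d * (dv / (d + v))) + pi * d / 2 * (2 / (x - 1)) = (pi * v) / (x - 1)"
  proof -
    define s where "s = x - 1"
    have s0: "s \<noteq> 0" using x by (simp add: s_def)
    have e: "s\<^sup>2 = (d - v) * (d + v)" using v2 unfolding s_def by (simp add: algebra_simps power2_eq_square)
    have bw: "d + v \<noteq> 0" "v \<noteq> 0" using d0 v0 by auto
    have t1: "dv - d * (dv / (d + v)) = - s / (d + v)"
    proof -
      have "dv - d * (dv / (d + v)) = dv * (1 - d / (d + v))" by (simp add: algebra_simps)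
      also have "1 - d / (d + v) = v / (d + v)" using bw by (simp add: field_simps)
      also have "dv * (v / (d + v)) = (dv * v) / (d + v)" by simp
      also have "dv * v = - s" using bw unfolding dv_def s_def by simp
      finally show ?thesis .
    qed
    have t2: "pi * d / 2 * (2 / (x - 1)) = pi * (d / s)" by (simp add: s_def)
    have "pi * (dv - d * (dv / (d + v))) + pi * d / 2 * (2 / (x - 1)) = pi * (- s / (d + v) + d / s)"
      unfolding t1 t2 by (simp only: distrib_left)
    also have "\<dots> = pi * (v / s)" using alg_key[OF s0 e bw(1)] by simp
    finally show ?thesis by (simp add: s_def)
  qed
  show ?thesis using dd eq by (simp add: v_def)
qed

lemma Phi_sym2:
  assumes L: "0 \<le> L" "L < 1" and R: "R = sqrt (2 - L\<^sup>2)"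
  shows "Phi L R < 0"
proof -
  define B where "B = 1 - L\<^sup>2"
  have L2: "L\<^sup>2 < 1" using L by (simp add: abs_square_less_1)
  have B0: "B > 0" using L2 by (simp add: B_def)
  have R2: "R\<^sup>2 = 1 + B" using L2 by (simp add: R B_def)
  have R1: "1 < R" using L2 R by (simp add: real_less_rsqrt)
  have LR: "0 \<le> L" "L < 1" "1 < R" using L R1 by auto
  have LB: "L\<^sup>2 = 1 - B" by (simp add: B_def)
  define n where "n x = x * PP L R x" for x
  define w where "w x = sqrt ((R\<^sup>2 - x\<^sup>2) * (x\<^sup>2 - L\<^sup>2))" for x
  define M0 where "M0 x = pi / 2 * (w x - B * ln (B + w x) + B * ln (x + 1))" for x
  have nc: "continuous_on {L..R} n" unfolding n_def[abs_def]
    using PP_cont[OF L(1)] by (intro continuous_intros)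
  obtain D where D: "(PP L R has_real_derivative D) (at 1)" using PP_deriv[OF LR] by blast
  have nd: "(n has_real_derivative (1 * PP L R 1 + D * 1)) (at 1)"
    unfolding n_def[abs_def] using DERIV_mult'[OF DERIV_ident D] by (simp add: add.commute)
  have P1: "PP L R 1 = 1 * n 1" by (simp add: n_def)
  have M0c: "continuous_on {L..R} M0"
  proof -
    have "\<forall>x\<in>{L..R}. B + w x \<noteq> 0"
    proof
      fix x assume x: "x \<in> {L..R}"
      have "0 \<le> R\<^sup>2 - x\<^sup>2" "0 \<le> x\<^sup>2 - L\<^sup>2" using x L by (auto intro!: power_mono)
      then have "0 \<le> w x" unfolding w_def by simp
      then show "B + w x \<noteq> 0" using B0 by linarith
    qed
    moreover have "\<forall>x\<in>{L..R}. x + 1 \<noteq> 0" using L by auto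
    ultimately show ?thesis unfolding M0_def[abs_def] w_def
      by (intro continuous_intros) auto
  qed
  have Md: "((\<lambda>x. M0 x + pi * B / 4 * ln ((x - 1)\<^sup>2)) has_real_derivative n x / (x - 1)) (at x)"
    if "L < x" "x < R" "x \<noteq> 1" for x
    using M3_deriv[of L x R B] that L B0 LB R2 unfolding M0_def n_def w_def by auto
  have main: "Phi L R = integral {L..R} (\<lambda>x. (PP L R x - 1 * n x) / (x - 1))
     + 1 * ((M0 R + pi * B / 4 * ln ((R - 1)\<^sup>2)) - (M0 L + pi * B / 4 * ln ((L - 1)\<^sup>2)))"
    by (rule Phi_eq[OF LR nc nd P1 M0c Md])
  have wR: "w R = 0" and wL: "w L = 0" by (simp_all add: w_def)
  have e1: "M0 R + pi * B / 4 * ln ((R - 1)\<^sup>2) = 0"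
  proof -
    have "ln ((R - 1)\<^sup>2) = 2 * ln (R - 1)" using R1 by (simp add: ln_sq)
    moreover have "ln (R + 1) + ln (R - 1) = ln B" using ln_pm[OF R1] R2 by simp
    then have "B * ln (R + 1) + B * ln (R - 1) = B * ln B" by (metis distrib_left)
    then have "pi * (B * ln (R + 1) + B * ln (R - 1)) = pi * (B * ln B)" by simp
    ultimately show ?thesis unfolding M0_def wR by (simp add: algebra_simps)
  qed
  have e2: "M0 L + pi * B / 4 * ln ((L - 1)\<^sup>2) = 0"
  proof -
    have "ln ((L - 1)\<^sup>2) = 2 * ln (1 - L)" using L by (simp add: ln_sq)
    moreover have "ln (L + 1) + ln (1 - L) = ln B" using ln_pm2[OF L] by (simp add: B_def)
    then have "B * ln (L + 1) + B * ln (1 - L) = B * ln B" by (metis distrib_left)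
    then have "pi * (B * ln (L + 1) + B * ln (1 - L)) = pi * (B * ln B)" by simp
    ultimately show ?thesis unfolding M0_def wL by (simp add: algebra_simps)
  qed
  define g where "g x = - ((PP L R x - 1 * n x) / (x - 1))" for x
  have gi: "g integrable_on {L..R}"
    unfolding g_def by (intro integrable_neg G_integrable[OF PP_cont[OF L(1)] nc D nd P1])
  have PPnn: "0 \<le> PP L R x" if "x \<in> {L..R}" for x
  proof -
    have "0 \<le> R\<^sup>2 - x\<^sup>2" "0 \<le> x\<^sup>2 - L\<^sup>2" using that L by (auto intro!: power_mono)
    then show ?thesis using that L by (simp add: PP_def)
  qed
  have gform: "g x = (if x = 1 then 0 else PP L R x)" for x
  proof (cases "x = 1")
    case False
    then have "x - 1 \<noteq> 0" by simp
    then have "(PP L R x - 1 * n x) / (x - 1) = - PP L R x"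
      by (simp add: n_def field_simps)
    then show ?thesis using False by (simp add: g_def)
  qed (simp add: g_def)
  define x0 where "x0 = (L + 1) / 2"
  have x0: "L < x0" "x0 < R" "x0 \<noteq> 1" "x0 < 1" using L R1 by (auto simp: x0_def)
  have "integral {L..R} g > 0"
  proof (rule integral_pos_pt[OF gi _ x0(1,2)])
    fix x assume "x \<in> {L..R}" then show "0 \<le> g x" using PPnn by (simp add: gform)
  next
    have "isCont (PP L R) x0"
      using continuous_on_interior[OF PP_cont[OF L(1)], of x0] x0 by simp
    then have "isCont (\<lambda>x. - ((PP L R x - 1 * (x * PP L R x)) / (x - 1))) x0"
      using x0 by (intro continuous_intros) auto
    then show "isCont g x0" unfolding g_def n_def .
  next
    have "0 < R\<^sup>2 - x0\<^sup>2" "0 < x0\<^sup>2 - L\<^sup>2" using x0 L by (auto intro!: power_strict_mono)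
    then have "0 < PP L R x0" using x0 L by (simp add: PP_def)
    then show "0 < g x0" using x0 by (simp add: gform)
  qed
  moreover have "integral {L..R} g = - integral {L..R} (\<lambda>x. (PP L R x - 1 * n x) / (x - 1))"
    unfolding g_def by (rule integral_neg)
  ultimately show ?thesis using main e1 e2 by simp
qed


lemma Phi_sym1:
  assumes L: "0 \<le> L" "L < 1" and R: "R = 2 - L"
  shows "Phi L R > 0"
proof -
  define d where "d = 1 - L"
  have d0: "d > 0" "d \<le> 1" using L by (auto simp: d_def)
  have Rd: "R = 1 + d" and Ld: "L = 1 - d" by (simp_all add: R d_def)
  have LR: "0 \<le> L" "L < 1" "1 < R" using L d0 Rd by auto
  define v where "v x = sqrt (d\<^sup>2 - (x - 1)\<^sup>2)" for x
  define n where "n x = pi * v x" for x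
  define c where "c = sqrt (4 - d\<^sup>2) / 2"
  define M0 where "M0 x = pi * (v x - d * ln (d + v x))" for x
  have nc: "continuous_on {L..R} n" unfolding n_def[abs_def] v_def by (intro continuous_intros)
  have "\<exists>D. (n has_real_derivative D) (at 1)"
    unfolding n_def[abs_def] v_def using d0 by (intro exI) (auto intro!: derivative_eq_intros)
  then obtain n' where nd: "(n has_real_derivative n') (at 1)" by blast
  obtain D where D: "(PP L R has_real_derivative D) (at 1)" using PP_deriv[OF LR] by blast
  have P1: "PP L R 1 = c * n 1"
  proof -
    have "(R\<^sup>2 - 1) * (1 - L\<^sup>2) = d\<^sup>2 * (4 - d\<^sup>2)" unfolding Rd Ld by (simp add: algebra_simps power2_eq_square)
    then have "sqrt ((R\<^sup>2 - 1\<^sup>2) * (1\<^sup>2 - L\<^sup>2)) = d * sqrt (4 - d\<^sup>2)" using d0 by (simp add: real_sqrt_mult)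
    then show ?thesis by (simp add: PP_def c_def n_def v_def d0(1) less_imp_le)
  qed
  have vnn: "0 \<le> v x" if "x \<in> {L..R}" for x
  proof -
    have "\<bar>x - 1\<bar> \<le> d" using that Rd Ld by auto
    then have "(x - 1)\<^sup>2 \<le> d\<^sup>2" using abs_le_square_iff[of "x - 1" d] d0 by simp
    then show ?thesis by (simp add: v_def)
  qed
  have M0c: "continuous_on {L..R} M0"
  proof -
    have "\<forall>x\<in>{L..R}. d + v x \<noteq> 0" using vnn d0 by (metis add_pos_nonneg less_irrefl)
    then show ?thesis unfolding M0_def[abs_def] v_def by (intro continuous_intros) auto
  qed
  have Md: "((\<lambda>x. M0 x + pi * d / 2 * ln ((x - 1)\<^sup>2)) has_real_derivative n x / (x - 1)) (at x)"
    if "L < x" "x < R" "x \<noteq> 1" for x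
  proof -
    have "\<bar>x - 1\<bar> < d" using that Rd Ld by auto
    from M4_deriv[OF this that(3)] show ?thesis unfolding M0_def n_def v_def by simp
  qed
  have main: "Phi L R = integral {L..R} (\<lambda>x. (PP L R x - c * n x) / (x - 1))
     + c * ((M0 R + pi * d / 2 * ln ((R - 1)\<^sup>2)) - (M0 L + pi * d / 2 * ln ((L - 1)\<^sup>2)))"
    by (rule Phi_eq[OF LR nc nd P1 M0c Md])
  have bnd: "M0 y + pi * d / 2 * ln ((y - 1)\<^sup>2) = 0" if "(y - 1)\<^sup>2 = d\<^sup>2" for y
  proof -
    have "v y = 0" using that by (simp add: v_def)
    moreover have "ln ((y - 1)\<^sup>2) = 2 * ln d" using that d0 by (simp add: ln_sq)
    ultimately show ?thesis by (simp add: M0_def)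
  qed
  have e1: "M0 R + pi * d / 2 * ln ((R - 1)\<^sup>2) = 0" by (rule bnd) (simp add: Rd)
  have e2: "M0 L + pi * d / 2 * ln ((L - 1)\<^sup>2) = 0" by (rule bnd) (simp add: Ld power2_eq_square)
  define Wf where "Wf x = sqrt (1 - d\<^sup>2 / (x + 1)\<^sup>2)" for x
  have cW: "c = Wf 1"
  proof -
    have "sqrt (4 - d\<^sup>2) = sqrt (4 * (1 - d\<^sup>2 / 4))" by simp
    also have "\<dots> = sqrt 4 * sqrt (1 - d\<^sup>2 / 4)" by (rule real_sqrt_mult)
    also have "sqrt 4 = (2::real)" by (rule real_sqrt_unique) simp_all
    finally show ?thesis by (simp add: c_def Wf_def)
  qed
  have PPf: "PP L R x = pi * v x * Wf x" if "x \<in> {L..R}" for x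
  proof -
    have x1: "x + 1 > 0" using that L by auto
    have "(R\<^sup>2 - x\<^sup>2) * (x\<^sup>2 - L\<^sup>2) = (d\<^sup>2 - (x - 1)\<^sup>2) * ((x + 1)\<^sup>2 * (1 - d\<^sup>2 / (x + 1)\<^sup>2))"
    proof -
      have "(x + 1)\<^sup>2 * (1 - d\<^sup>2 / (x + 1)\<^sup>2) = (x + 1)\<^sup>2 - d\<^sup>2"
        using x1 by (simp add: right_diff_distrib)
      then show ?thesis unfolding Rd Ld by (simp add: algebra_simps power2_eq_square)
    qed
    then have "sqrt ((R\<^sup>2 - x\<^sup>2) * (x\<^sup>2 - L\<^sup>2)) = v x * ((x + 1) * Wf x)"
      using x1 by (simp add: real_sqrt_mult v_def Wf_def)
    then show ?thesis using x1 by (simp add: PP_def)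
  qed
  define G where "G x = (PP L R x - c * n x) / (x - 1)" for x
  have Gi: "G integrable_on {L..R}"
    unfolding G_def[abs_def] by (rule G_integrable[OF PP_cont[OF L(1)] nc D nd P1])
  have Gf: "G x = pi * v x * ((Wf x - Wf 1) / (x - 1))" if "x \<in> {L..R}" for x
    using PPf[OF that] unfolding G_def cW n_def by (simp add: algebra_simps)
  have Wmono: "(Wf x - Wf 1) / (x - 1) \<ge> 0" "x > 1 \<Longrightarrow> (Wf x - Wf 1) / (x - 1) > 0"
    if "x \<in> {L..R}" for x
  proof -
    have x1: "x + 1 > 0" using that L by auto
    have d2: "d\<^sup>2 / (x + 1)\<^sup>2 \<le> 1"
    proof -
      have "d \<le> x + 1" using that Ld d0 by auto
      then have "d\<^sup>2 \<le> (x + 1)\<^sup>2" using d0 by (intro power_mono) auto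
      then show ?thesis using x1 by (simp add: divide_le_eq_1)
    qed
    have A: "Wf x > Wf 1" if "x > 1"
    proof -
      have "(1 + 1)\<^sup>2 < (x + 1)\<^sup>2" using that by (intro power_strict_mono) auto
      then have "d\<^sup>2 / (x + 1)\<^sup>2 < d\<^sup>2 / (1 + 1)\<^sup>2" using d0 by (intro divide_strict_left_mono) auto
      then show ?thesis unfolding Wf_def by (intro real_sqrt_less_mono) simp
    qed
    have Bm: "Wf x < Wf 1" if "x < 1"
    proof -
      have "(x + 1)\<^sup>2 < (1 + 1)\<^sup>2" using that x1 by (intro power_strict_mono) auto
      then have "d\<^sup>2 / (1 + 1)\<^sup>2 < d\<^sup>2 / (x + 1)\<^sup>2" using d0 x1 by (intro divide_strict_left_mono) auto
      then show ?thesis unfolding Wf_def by (intro real_sqrt_less_mono) simp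
    qed
    show "(Wf x - Wf 1) / (x - 1) \<ge> 0"
    proof (cases x "1::real" rule: linorder_cases)
      case less then show ?thesis using Bm by (simp add: divide_nonpos_neg)
    next
      case equal then show ?thesis by simp
    next
      case greater then show ?thesis using A by simp
    qed
    show "(Wf x - Wf 1) / (x - 1) > 0" if "x > 1" using A[OF that] that by simp
  qed
  define x0 where "x0 = 1 + d / 2"
  have x0: "L < x0" "x0 < R" "x0 > 1" "x0 \<in> {L..R}" using d0 Rd Ld by (auto simp: x0_def)
  have "integral {L..R} G > 0"
  proof (rule integral_pos_pt[OF Gi _ x0(1,2)])
    fix x assume x: "x \<in> {L..R}"
    have "0 \<le> pi * v x * ((Wf x - Wf 1) / (x - 1))"
      using vnn[OF x] Wmono(1)[OF x] by (intro mult_nonneg_nonneg) auto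
    then show "0 \<le> G x" using Gf[OF x] by simp
  next
    have "isCont (PP L R) x0"
      using continuous_on_interior[OF PP_cont[OF L(1)], of x0] x0 by simp
    then show "isCont G x0" unfolding G_def n_def v_def using x0
      by (intro continuous_intros) auto
  next
    have "v x0 > 0"
    proof -
      have "(x0 - 1)\<^sup>2 < d\<^sup>2" using d0 by (simp add: x0_def power_divide)
      then show ?thesis by (simp add: v_def)
    qed
    then have "0 < pi * v x0 * ((Wf x0 - Wf 1) / (x0 - 1))"
      using Wmono(2)[OF x0(4) x0(3)] by (intro mult_pos_pos) auto
    then show "0 < G x0" using Gf[OF x0(4)] by simp
  qed
  then show ?thesis using main e1 e2 by (simp add: G_def[abs_def])
qed

theorem lemma4p10:
  shows "(\<forall>R>1. strict_mono_on {0..<1} (\<lambda>L. Phi L R))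
       \<and> (\<forall>L. 0 \<le> L \<and> L < 1 \<longrightarrow> strict_mono_on {1<..} (\<lambda>R. Phi L R))
       \<and> (\<exists>!Rc. Rc > 1 \<and> Phi 0 Rc = 0)
       \<and> (\<forall>L R. 0 \<le> L \<and> L < 1 \<and> 1 < R \<and> Phi L R = 0 \<longrightarrow> L + R < 2 \<and> L\<^sup>2 + R\<^sup>2 > 2)"
proof (intro conjI allI impI)
  fix R :: real assume R: "R > 1"
  show "strict_mono_on {0..<1} (\<lambda>L. Phi L R)"
    by (rule strict_mono_onI) (use Phi_mono_L R in auto)
next
  fix L :: real assume L: "0 \<le> L \<and> L < 1"
  show "strict_mono_on {1<..} (\<lambda>R. Phi L R)"
    by (rule strict_mono_onI) (use Phi_mono_R L in auto)
next
  show "\<exists>!Rc. Rc > 1 \<and> Phi 0 Rc = 0"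
  proof -
    obtain Rc where Rc: "Rc > 1" "Phi 0 Rc = 0" using root_exists by blast
    have "R = Rc" if "R > 1" "Phi 0 R = 0" for R
    proof (rule ccontr)
      assume "R \<noteq> Rc"
      then consider "R < Rc" | "Rc < R" by linarith
      then show False
      proof cases
        case 1 then show False using Phi_mono_R[of 0 R Rc] that Rc by simp
      next
        case 2 then show False using Phi_mono_R[of 0 Rc R] that Rc by simp
      qed
    qed
    then show ?thesis using Rc by blast
  qed
next
  fix L R :: real assume h: "0 \<le> L \<and> L < 1 \<and> 1 < R \<and> Phi L R = 0"
  then have L: "0 \<le> L" "L < 1" and R: "1 < R" and P: "Phi L R = 0" by auto
  show "L + R < 2"
  proof (rule ccontr)
    assume "\<not> L + R < 2"
    then consider "R = 2 - L" | "2 - L < R" by linarith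
    then show False
    proof cases
      case 1 then show False using Phi_sym1[OF L 1] P by simp
    next
      case 2
      have "Phi L (2 - L) < Phi L R" using Phi_mono_R[OF L _ 2] L by simp
      moreover have "Phi L (2 - L) > 0" using Phi_sym1[OF L refl] .
      ultimately show False using P by simp
    qed
  qed
  show "L\<^sup>2 + R\<^sup>2 > 2"
  proof (rule ccontr)
    assume a: "\<not> L\<^sup>2 + R\<^sup>2 > 2"
    define R0 where "R0 = sqrt (2 - L\<^sup>2)"
    have "R \<le> R0" unfolding R0_def using a by (intro real_le_rsqrt) simp
    then consider "R = R0" | "R < R0" by linarith
    then show False
    proof cases
      case 1 then show False using Phi_sym2[OF L] P R0_def by simp
    next
      case 2
      have "Phi L R < Phi L R0" using Phi_mono_R[OF L R 2] .
      moreover have "Phi L R0 < 0" using Phi_sym2[OF L R0_def] .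
      ultimately show False using P by simp
    qed
  qed
qed

end
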